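(* Let $G$ and $H$ be graphs, $k \in \mathbb{N}$, and suppose that $\Phi$ is a level-$k$ quantum isomorphism map from $G$ to $H$. If $M$ is the Choi matrix of $\Phi$, then $M_{s,t} = 0$ for $s,t \in (V(G)\times V(H))^k$ whenever some cyclic permutation of the string $s^R t$ contains consecutive letters $gh$ and $g'h'$ (with $g,g' \in V(G)$, $h,h' \in V(H)$) such that $\mathrm{rel}_G(g,g') \neq \mathrm{rel}_H(h,h')$.
   Context: Graphs are finite, undirected, without multiple edges; $G,H$ are simple. For $g,g'\in V(G)$ and $h,h'\in V(H)$, $\mathrm{rel}_G(g,g')=\mathrm{rel}_H(h,h')$ means both pairs are adjacent, both are non-adjacent distinct, or both are equal. Let $\Sigma = V(G)\times V(H)$; a letter $(g,h)$ is written $gh$. For a string $s=s_1\cdots s_k$, $s^R = s_k\cdots s_1$ is its reversal, and $st$ denotes concatenation. A $(k,k)$-bilabelled graph is $\boldsymbol{F}=(F,\boldsymbol{u},\boldsymbol{v})$ with $\boldsymbol{u},\boldsymbol{v}\in V(F)^k$; its homomorphism tensor $\boldsymbol{F}_G\in\mathbb{C}^{V(G)^k\times V(G)^k}$ has $(\boldsymbol{x},\boldsymbol{y})$-entry equal to the number of homomorphisms $h:F\to G$ with $h(u_i)=x_i$, $h(v_i)=y_i$. Atomic graphs: $\mathcal{Q}_k^P$ is the set of $(k,k)$-bilabelled minors (obtained by edge contraction, edge deletion, deletion of unlabelled vertices) of $\boldsymbol{C}_k=(C_k,(1,\dots,k),(k+1,\dots,2k))$, where $V(C_k)=[2k]$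 and $E(C_k)=\{\{i,i+1\}: i\in[2k], i\neq k,2k\}\cup\{\{1,k+1\},\{k,2k\}\}$; $\mathcal{Q}_k^S$ is the set of bilabelled minors of $\boldsymbol{M}_k=(M_k,(1,\dots,k),(k+1,\dots,2k))$ with $V(M_k)=[2k]$, $E(M_k)=\{\{i,i+k\}:i\in[k]\}$; $\mathcal{Q}_k=\mathcal{Q}_k^P\cup\mathcal{Q}_k^S$. $I$ and $J$ denote the identity and all-ones matrices, $\odot$ the Schur (entrywise) product. For $\sigma$ a permutation of the $2k$ label positions, $X^\sigma$ denotes the matrix obtained by permuting the $2k$ index coordinates accordingly; $\mathscr{C}(1,\dots,k,2k,\dots,k+1)$ is the group of cyclic permutations of the cyclic order $1,\dots,k,2k,\dots,k+1$. A linear map $\Phi:\mathbb{C}^{V(G)^k\times V(G)^k}\to\mathbb{C}^{V(H)^k\times V(H)^k}$ is a level-$k$ quantum isomorphism map from $G$ to $H$ if: $\Phi$ is completely positive; $\Phi(\boldsymbol{F}_G\odot X)=\boldsymbol{F}_H\odot\Phi(X)$ for all $\boldsymbol{F}\in\mathcal{Q}_k^P$ and all $X$; $\Phi(I)=I=\Phi^*(I)$; $\Phi(J)=J=\Phi^*(J)$; $\Phi(\boldsymbol{F}_G)=\boldsymbol{F}_H$ for all $\boldsymbol{F}\in\mathcal{Q}_k$; and $\Phi(X^\sigma)=\Phi(X)^\sigma$ for all $\sigma\in\mathscr{C}(1,\dots,k,2k,\dots,k+1)$. The Choi matrix $M$ of $\Phi$ is indexed by $(V(G)\times V(H))^k$,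 with $M_{g_1h_1\cdots g_kh_k,\,g'_1h'_1\cdots g'_kh'_k}=\Phi(E^{g_1\cdots g_k,\,g'_1\cdots g'_k})_{h_1\cdots h_k,\,h'_1\cdots h'_k}$, where $E^{\boldsymbol{x},\boldsymbol{y}}$ is the matrix unit. *)

theory Defs
  imports Complex_Main "HOL-Library.FuncSet"
begin

text \<open>A (simple) graph on a finite vertex type: symmetric, irreflexive adjacency.
  The vertex set is UNIV of the finite type.\<close>
definition simple_graph :: "('a::finite \<Rightarrow> 'a \<Rightarrow> bool) \<Rightarrow> bool" where
  "simple_graph adj \<longleftrightarrow> (\<forall>x y. adj x y \<longrightarrow> adj y x) \<and> (\<forall>x. \<not> adj x x)"

definition rel :: "('a \<Rightarrow> 'a \<Rightarrow> bool) \<Rightarrow> 'a \<Rightarrow> 'a \<Rightarrow> nat" where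
  "rel adj x y = (if x = y then 0 else if adj x y then 1 else 2)"

definition tuples :: "nat \<Rightarrow> 'a list set" where
  "tuples k = {xs. length xs = k}"

type_synonym ('a) kmat = "'a list \<Rightarrow> 'a list \<Rightarrow> complex"

text \<open>Matrices in C^{V^k x V^k}: functions vanishing outside valid indices.\<close>
definition mats :: "nat \<Rightarrow> 'a kmat set" where
  "mats k = {X. \<forall>x y. (x \<notin> tuples k \<or> y \<notin> tuples k) \<longrightarrow> X x y = 0}"

definition idm :: "nat \<Rightarrow> 'a kmat" where
  "idm k x y = (if x \<in> tuples k \<and> y \<in> tuples k \<and> x = y then 1 else 0)"

definition onesm :: "nat \<Rightarrow> 'a kmat" where
  "onesm k x y = (if x \<in> tuples k \<and> y \<in> tuples k then 1 else 0)"

definition unitm :: "'a list \<Rightarrow> 'a list \<Rightarrow> 'a kmat" where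
  "unitm x y a b = (if a = x \<and> b = y then 1 else 0)"

definition schur :: "'a kmat \<Rightarrow> 'a kmat \<Rightarrow> 'a kmat" where
  "schur A B x y = A x y * B x y"

text \<open>A (k,k)-bilabelled graph: vertex set, edge set (2-element sets), labels u, v.\<close>
type_synonym blgraph = "nat set \<times> nat set set \<times> nat list \<times> nat list"

inductive_set bl_minors :: "blgraph \<Rightarrow> blgraph set" for F :: blgraph where
  base: "F \<in> bl_minors F"
| del_edge: "(V, E, u, v) \<in> bl_minors F \<Longrightarrow> e \<in> E \<Longrightarrow> (V, E - {e}, u, v) \<in> bl_minors F"
| contract: "(V, E, u, v) \<in> bl_minors F \<Longrightarrow> {a, b} \<in> E \<Longrightarrow> a \<noteq> b \<Longrightarrow>
     (V - {b}, (\<lambda>e. (\<lambda>w. if w = b then a else w) ` e) ` (E - {{a, b}}),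
      map (\<lambda>w. if w = b then a else w) u, map (\<lambda>w. if w = b then a else w) v) \<in> bl_minors F"
| del_vertex: "(V, E, u, v) \<in> bl_minors F \<Longrightarrow> w \<in> V \<Longrightarrow> w \<notin> set u \<Longrightarrow> w \<notin> set v \<Longrightarrow>
     (V - {w}, {e \<in> E. w \<notin> e}, u, v) \<in> bl_minors F"

definition Ck :: "nat \<Rightarrow> blgraph" where
  "Ck k = ({1..2*k},
           {{i, i+1} | i. i \<in> {1..2*k} \<and> i \<noteq> k \<and> i \<noteq> 2*k} \<union> {{1, k+1}, {k, 2*k}},
           [1..<k+1], [k+1..<2*k+1])"

definition Mk :: "nat \<Rightarrow> blgraph" where
  "Mk k = ({1..2*k}, {{i, i+k} | i. i \<in> {1..k}}, [1..<k+1], [k+1..<2*k+1])"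

definition QP :: "nat \<Rightarrow> blgraph set" where "QP k = bl_minors (Ck k)"
definition QS :: "nat \<Rightarrow> blgraph set" where "QS k = bl_minors (Mk k)"
definition Q :: "nat \<Rightarrow> blgraph set" where "Q k = QP k \<union> QS k"

definition hom_tensor :: "nat \<Rightarrow> blgraph \<Rightarrow> ('a::finite \<Rightarrow> 'a \<Rightarrow> bool) \<Rightarrow> 'a kmat" where
  "hom_tensor k F adj x y =
    (case F of (V, E, u, v) \<Rightarrow>
      if x \<in> tuples k \<and> y \<in> tuples k then
        of_nat (card {h \<in> V \<rightarrow>\<^sub>E (UNIV :: 'a set).
           (\<forall>a b. {a, b} \<in> E \<longrightarrow> adj (h a) (h b)) \<and>
           (\<forall>i<k. h (u ! i) = x ! i \<and> h (v ! i) = y ! i)})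
      else 0)"

text \<open>Positions 0..2k-1 (0-indexed); X^sigma(w) = X(w o sigma) where w = x @ y.\<close>
definition permm :: "nat \<Rightarrow> (nat \<Rightarrow> nat) \<Rightarrow> 'a kmat \<Rightarrow> 'a kmat" where
  "permm k \<sigma> X x y =
    (if x \<in> tuples k \<and> y \<in> tuples k then
       (let w = x @ y; w' = map (\<lambda>i. w ! (\<sigma> i)) [0..<2*k] in X (take k w') (drop k w'))
     else 0)"

text \<open>The cyclic order 1,...,k,2k,...,k+1 (0-indexed) and its rotations.\<close>
definition cyc_order :: "nat \<Rightarrow> nat list" where
  "cyc_order k = [0..<k] @ rev [k..<2*k]"

text \<open>Index of position i in cyc_order k (for i < 2k).\<close>
definition cyc_pos :: "nat \<Rightarrow> nat \<Rightarrow> nat" where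
  "cyc_pos k i = (if i < k then i else 3*k - 1 - i)"

definition cyc_rot :: "nat \<Rightarrow> nat \<Rightarrow> nat \<Rightarrow> nat" where
  "cyc_rot k m i = (if i < 2*k then cyc_order k ! ((cyc_pos k i + m) mod (2*k)) else i)"

definition cyclic_perms :: "nat \<Rightarrow> (nat \<Rightarrow> nat) set" where
  "cyclic_perms k = {cyc_rot k m | m. True}"

definition psd_on :: "'i set \<Rightarrow> ('i \<Rightarrow> 'i \<Rightarrow> complex) \<Rightarrow> bool" where
  "psd_on S A \<longleftrightarrow> (\<forall>v. let q = (\<Sum>a\<in>S. \<Sum>b\<in>S. cnj (v a) * A a b * v b) in Im q = 0 \<and> Re q \<ge> 0)"

definition linear_kmap :: "nat \<Rightarrow> ('a kmat \<Rightarrow> 'b kmat) \<Rightarrow> bool" where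
  "linear_kmap k \<Phi> \<longleftrightarrow> (\<forall>X \<in> mats k. \<Phi> X \<in> mats k) \<and>
     (\<forall>X \<in> mats k. \<forall>Y \<in> mats k. \<Phi> (\<lambda>x y. X x y + Y x y) = (\<lambda>x y. \<Phi> X x y + \<Phi> Y x y)) \<and>
     (\<forall>X \<in> mats k. \<forall>c. \<Phi> (\<lambda>x y. c * X x y) = (\<lambda>x y. c * \<Phi> X x y))"

text \<open>Phi \<otimes> id_n applied to a block matrix indexed by (V^k x [n]).\<close>
definition ampl :: "nat \<Rightarrow> ('a kmat \<Rightarrow> 'b kmat) \<Rightarrow> ('a list \<times> nat \<Rightarrow> 'a list \<times> nat \<Rightarrow> complex)
     \<Rightarrow> ('b list \<times> nat \<Rightarrow> 'b list \<times> nat \<Rightarrow> complex)" where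
  "ampl k \<Phi> X p q = \<Phi> (\<lambda>x y. if x \<in> tuples k \<and> y \<in> tuples k then X (x, snd p) (y, snd q) else 0) (fst p) (fst q)"

definition completely_positive :: "nat \<Rightarrow> ('a kmat \<Rightarrow> 'b kmat) \<Rightarrow> bool" where
  "completely_positive k \<Phi> \<longleftrightarrow>
     (\<forall>n X. psd_on (tuples k \<times> {..<n}) X \<longrightarrow> psd_on (tuples k \<times> {..<n}) (ampl k \<Phi> X))"

text \<open>Adjoint w.r.t. the Hilbert-Schmidt inner product <A,B> = tr(A^* B).\<close>
definition adjoint_kmap :: "nat \<Rightarrow> ('a::finite kmat \<Rightarrow> 'b::finite kmat) \<Rightarrow> 'b kmat \<Rightarrow> 'a kmat" where
  "adjoint_kmap k \<Phi> Y x y =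
    (if x \<in> tuples k \<and> y \<in> tuples k then
       (\<Sum>a\<in>tuples k. \<Sum>b\<in>tuples k. cnj (\<Phi> (unitm x y) a b) * Y a b)
     else 0)"

definition level_k_qi_map ::
  "nat \<Rightarrow> ('a::finite \<Rightarrow> 'a \<Rightarrow> bool) \<Rightarrow> ('b::finite \<Rightarrow> 'b \<Rightarrow> bool) \<Rightarrow> ('a kmat \<Rightarrow> 'b kmat) \<Rightarrow> bool" where
  "level_k_qi_map k adjG adjH \<Phi> \<longleftrightarrow>
     linear_kmap k \<Phi> \<and>
     completely_positive k \<Phi> \<and>
     (\<forall>F \<in> QP k. \<forall>X \<in> mats k. \<Phi> (schur (hom_tensor k F adjG) X) = schur (hom_tensor k F adjH) (\<Phi> X)) \<and>
     \<Phi> (idm k) = idm k \<and> adjoint_kmap k \<Phi> (idm k) = idm k \<and>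
     \<Phi> (onesm k) = onesm k \<and> adjoint_kmap k \<Phi> (onesm k) = onesm k \<and>
     (\<forall>F \<in> Q k. \<Phi> (hom_tensor k F adjG) = hom_tensor k F adjH) \<and>
     (\<forall>\<sigma> \<in> cyclic_perms k. \<forall>X \<in> mats k. \<Phi> (permm k \<sigma> X) = permm k \<sigma> (\<Phi> X))"

definition choi :: "nat \<Rightarrow> ('a kmat \<Rightarrow> 'b kmat) \<Rightarrow> ('a \<times> 'b) list \<Rightarrow> ('a \<times> 'b) list \<Rightarrow> complex" where
  "choi k \<Phi> s t = \<Phi> (unitm (map fst s) (map fst t)) (map snd s) (map snd t)"

end

theory Submission
  imports Defs
begin

definition labf :: "nat \<Rightarrow> 'c list \<Rightarrow> 'c list \<Rightarrow> nat \<Rightarrow> 'c" where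
  "labf k x y p = (if p \<le> k then x ! (p - 1) else y ! (p - k - 1))"

definition ECk :: "nat \<Rightarrow> nat set set" where
  "ECk k = {{i, i+1} | i. i \<in> {1..2*k} \<and> i \<noteq> k \<and> i \<noteq> 2*k} \<union> {{1, k+1}, {k, 2*k}}"

lemma Ck_eq: "Ck k = ({1..2*k}, ECk k, [1..<k+1], [k+1..<2*k+1])"
  unfolding Ck_def ECk_def by simp

lemma finite_ECk: "finite (ECk k)"
proof -
  have "ECk k \<subseteq> Pow {0..2*k+1}" unfolding ECk_def by auto
  then show ?thesis by (rule finite_subset) simp
qed

lemma minor_del:
  assumes "(V, E, u, v) \<in> bl_minors F" "finite D" "D \<subseteq> E"
  shows "(V, E - D, u, v) \<in> bl_minors F"
  using assms(2,3)
proof (induction D rule: finite_induct)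
  case empty
  then show ?case using assms(1) by simp
next
  case (insert d D)
  then have "(V, E - D, u, v) \<in> bl_minors F" by simp
  moreover have "d \<in> E - D" using insert by auto
  ultimately have "(V, (E - D) - {d}, u, v) \<in> bl_minors F" by (rule bl_minors.del_edge)
  moreover have "(E - D) - {d} = E - insert d D" by auto
  ultimately show ?case by simp
qed

lemma single_edge:
  assumes "e \<in> ECk k"
  shows "({1..2*k}, {e}, [1..<k+1], [k+1..<2*k+1]) \<in> QP k"
proof -
  have "({1..2*k}, ECk k - (ECk k - {e}), [1..<k+1], [k+1..<2*k+1]) \<in> bl_minors (Ck k)"
    by (rule minor_del) (auto simp: Ck_eq intro: bl_minors.base finite_ECk)
  moreover have "ECk k - (ECk k - {e}) = {e}" using assms by auto
  ultimately show ?thesis unfolding QP_def by simp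
qed

lemma contr_edge:
  assumes "{a, b} \<in> ECk k" "a \<noteq> b"
  shows "({1..2*k} - {b}, {}, map (\<lambda>w. if w = b then a else w) [1..<k+1],
          map (\<lambda>w. if w = b then a else w) [k+1..<2*k+1]) \<in> QP k"
proof -
  have "({1..2*k}, {{a,b}}, [1..<k+1], [k+1..<2*k+1]) \<in> bl_minors (Ck k)"
    using single_edge[OF assms(1)] unfolding QP_def .
  then have "({1..2*k} - {b}, (\<lambda>e. (\<lambda>w. if w = b then a else w) ` e) ` ({{a,b}} - {{a, b}}),
      map (\<lambda>w. if w = b then a else w) [1..<k+1], map (\<lambda>w. if w = b then a else w) [k+1..<2*k+1]) \<in> bl_minors (Ck k)"
    by (rule bl_minors.contract) (auto simp: assms)
  then show ?thesis unfolding QP_def by simp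
qed

lemma lab_equiv:
  assumes "length x = k" "length y = k"
  shows "(\<forall>i<k. \<phi> ([1..<k+1] ! i) = x ! i \<and> \<phi> ([k+1..<2*k+1] ! i) = y ! i) \<longleftrightarrow>
         (\<forall>p\<in>{1..2*k}. \<phi> p = labf k x y p)"
proof
  assume H: "\<forall>i<k. \<phi> ([1..<k+1] ! i) = x ! i \<and> \<phi> ([k+1..<2*k+1] ! i) = y ! i"
  show "\<forall>p\<in>{1..2*k}. \<phi> p = labf k x y p"
  proof
    fix p assume p: "p \<in> {1..2*k}"
    show "\<phi> p = labf k x y p"
    proof (cases "p \<le> k")
      case True
      have "[1..<k+1] ! (p - 1) = p" using True p by (subst nth_upt) auto
      then show ?thesis using H[rule_format, of "p - 1"] True p by (auto simp: labf_def)
    next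
      case False
      have "[k+1..<2*k+1] ! (p - k - 1) = p" using False p by (subst nth_upt) auto
      then show ?thesis using H[rule_format, of "p - k - 1"] False p by (auto simp: labf_def)
    qed
  qed
next
  assume H: "\<forall>p\<in>{1..2*k}. \<phi> p = labf k x y p"
  show "\<forall>i<k. \<phi> ([1..<k+1] ! i) = x ! i \<and> \<phi> ([k+1..<2*k+1] ! i) = y ! i"
  proof (intro allI impI)
    fix i assume i: "i < k"
    show "\<phi> ([1..<k+1] ! i) = x ! i \<and> \<phi> ([k+1..<2*k+1] ! i) = y ! i"
    proof -
      have "[1..<k+1] ! i = i + 1" using i by (subst nth_upt) auto
      moreover have "[k+1..<2*k+1] ! i = k + 1 + i" using i by (subst nth_upt) auto
      ultimately show ?thesis
        using H[rule_format, of "i+1"] H[rule_format, of "k+1+i"] i by (auto simp: labf_def)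
    qed
  qed
qed

lemma card_restrict:
  "card {h \<in> V \<rightarrow>\<^sub>E (UNIV::'a set). (\<forall>p\<in>V. h p = f p) \<and> P h} = (if P (restrict f V) then 1 else 0)"
proof -
  have "{h \<in> V \<rightarrow>\<^sub>E (UNIV::'a set). (\<forall>p\<in>V. h p = f p) \<and> P h} =
        (if P (restrict f V) then {restrict f V} else {})"
  proof -
    have "\<And>h. (h \<in> V \<rightarrow>\<^sub>E (UNIV::'a set) \<and> (\<forall>p\<in>V. h p = f p)) = (h = restrict f V)"
      by (auto simp: PiE_iff extensional_def fun_eq_iff)
    then have "{h \<in> V \<rightarrow>\<^sub>E (UNIV::'a set). (\<forall>p\<in>V. h p = f p) \<and> P h} = {h. h = restrict f V \<and> P h}"
      by blast
    then show ?thesis by auto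
  qed
  then show ?thesis by simp
qed


lemma ht_del:
  fixes adj :: "'a::finite \<Rightarrow> 'a \<Rightarrow> bool"
  assumes sym: "\<forall>x y. adj x y \<longrightarrow> adj y x" and lx: "length x = k" and ly: "length y = k"
    and ab: "a \<in> {1..2*k}" "b \<in> {1..2*k}"
  shows "hom_tensor k ({1..2*k}, {{a,b}}, [1..<k+1], [k+1..<2*k+1]) adj x y =
         (if adj (labf k x y a) (labf k x y b) then 1 else 0)"
proof -
  let ?V = "{1..2*k}"
  have "{h \<in> ?V \<rightarrow>\<^sub>E (UNIV :: 'a set).
           (\<forall>a' b'. {a', b'} \<in> {{a,b}} \<longrightarrow> adj (h a') (h b')) \<and>
           (\<forall>i<k. h ([1..<k+1] ! i) = x ! i \<and> h ([k+1..<2*k+1] ! i) = y ! i)}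
      = {h \<in> ?V \<rightarrow>\<^sub>E (UNIV :: 'a set). (\<forall>p\<in>?V. h p = labf k x y p) \<and>
           (\<forall>a' b'. {a', b'} \<in> {{a,b}} \<longrightarrow> adj (h a') (h b'))}"
    using lab_equiv[OF lx ly] by blast
  moreover have "(\<forall>a' b'. {a', b'} \<in> {{a,b}} \<longrightarrow> adj (restrict (labf k x y) ?V a') (restrict (labf k x y) ?V b'))
     \<longleftrightarrow> adj (labf k x y a) (labf k x y b)"
  proof
    assume "\<forall>a' b'. {a', b'} \<in> {{a,b}} \<longrightarrow> adj (restrict (labf k x y) ?V a') (restrict (labf k x y) ?V b')"
    then have "adj (restrict (labf k x y) ?V a) (restrict (labf k x y) ?V b)" by auto
    then show "adj (labf k x y a) (labf k x y b)" using ab by simp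
  next
    assume A: "adj (labf k x y a) (labf k x y b)"
    show "\<forall>a' b'. {a', b'} \<in> {{a,b}} \<longrightarrow> adj (restrict (labf k x y) ?V a') (restrict (labf k x y) ?V b')"
    proof (intro allI impI)
      fix a' b' assume "{a', b'} \<in> {{a,b}}"
      then have "{a',b'} = {a,b}" by simp
      then have "(a' = a \<and> b' = b) \<or> (a' = b \<and> b' = a)" by (auto simp: doubleton_eq_iff)
      then show "adj (restrict (labf k x y) ?V a') (restrict (labf k x y) ?V b')"
        using A sym ab by auto
    qed
  qed
  ultimately show ?thesis
    unfolding hom_tensor_def using lx ly
    by (simp add: tuples_def card_restrict del: upt_Suc)
qed

lemma ht_contr:
  fixes adj :: "'a::finite \<Rightarrow> 'a \<Rightarrow> bool"
  assumes lx: "length x = k" and ly: "length y = k"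
    and ab: "a \<in> {1..2*k}" "b \<in> {1..2*k}" "a \<noteq> b"
  shows "hom_tensor k ({1..2*k} - {b}, {}, map (\<lambda>w. if w = b then a else w) [1..<k+1],
          map (\<lambda>w. if w = b then a else w) [k+1..<2*k+1]) adj x y =
         (if labf k x y a = labf k x y b then 1 else 0)"
proof -
  let ?V = "{1..2*k} - {b}"
  let ?r = "\<lambda>w. if w = b then a else w"
  have m1: "\<And>i. i < k \<Longrightarrow> map ?r [1..<k+1] ! i = ?r ([1..<k+1] ! i)"
    by (rule nth_map) simp
  have m2: "\<And>i. i < k \<Longrightarrow> map ?r [k+1..<2*k+1] ! i = ?r ([k+1..<2*k+1] ! i)"
    by (rule nth_map) simp
  have "\<And>h::nat\<Rightarrow>'a. (\<forall>i<k. h (map ?r [1..<k+1] ! i) = x ! i \<and> h (map ?r [k+1..<2*k+1] ! i) = y ! i)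
     \<longleftrightarrow> (\<forall>i<k. (h \<circ> ?r) ([1..<k+1] ! i) = x ! i \<and> (h \<circ> ?r) ([k+1..<2*k+1] ! i) = y ! i)"
    using m1 m2 by (simp del: upt_Suc)
  also have "\<And>h::nat\<Rightarrow>'a. (\<forall>i<k. (h \<circ> ?r) ([1..<k+1] ! i) = x ! i \<and> (h \<circ> ?r) ([k+1..<2*k+1] ! i) = y ! i)
     \<longleftrightarrow> (\<forall>p\<in>{1..2*k}. (h \<circ> ?r) p = labf k x y p)"
    by (rule lab_equiv[OF lx ly])
  also have "\<And>h::nat\<Rightarrow>'a. (\<forall>p\<in>{1..2*k}. (h \<circ> ?r) p = labf k x y p) \<longleftrightarrow>
       (\<forall>p\<in>?V. h p = labf k x y p) \<and> labf k x y a = labf k x y b"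
  proof -
    fix h :: "nat \<Rightarrow> 'a"
    show "(\<forall>p\<in>{1..2*k}. (h \<circ> ?r) p = labf k x y p) \<longleftrightarrow>
       (\<forall>p\<in>?V. h p = labf k x y p) \<and> labf k x y a = labf k x y b"
    proof
      assume H: "\<forall>p\<in>{1..2*k}. (h \<circ> ?r) p = labf k x y p"
      have 1: "\<forall>p\<in>?V. h p = labf k x y p"
      proof
        fix p assume "p \<in> ?V" then show "h p = labf k x y p" using H[rule_format, of p] by auto
      qed
      have "h a = labf k x y b" using H[rule_format, of b] ab by simp
      moreover have "h a = labf k x y a" using 1 ab by auto
      ultimately show "(\<forall>p\<in>?V. h p = labf k x y p) \<and> labf k x y a = labf k x y b" using 1 by simp
    next
      assume H: "(\<forall>p\<in>?V. h p = labf k x y p) \<and> labf k x y a = labf k x y b"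
      show "\<forall>p\<in>{1..2*k}. (h \<circ> ?r) p = labf k x y p"
      proof
        fix p assume p: "p \<in> {1..2*k}"
        show "(h \<circ> ?r) p = labf k x y p"
        proof (cases "p = b")
          case True then show ?thesis using H ab by auto
        next
          case False then show ?thesis using H p by auto
        qed
      qed
    qed
  qed
  finally have E: "\<And>h::nat\<Rightarrow>'a. (\<forall>i<k. h (map ?r [1..<k+1] ! i) = x ! i \<and> h (map ?r [k+1..<2*k+1] ! i) = y ! i)
     \<longleftrightarrow> (\<forall>p\<in>?V. h p = labf k x y p) \<and> labf k x y a = labf k x y b" .
  have "{h \<in> ?V \<rightarrow>\<^sub>E (UNIV :: 'a set).
           (\<forall>a' b'. {a', b'} \<in> ({}::nat set set) \<longrightarrow> adj (h a') (h b')) \<and>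
           (\<forall>i<k. h (map ?r [1..<k+1] ! i) = x ! i \<and> h (map ?r [k+1..<2*k+1] ! i) = y ! i)}
      = {h \<in> ?V \<rightarrow>\<^sub>E (UNIV :: 'a set). (\<forall>p\<in>?V. h p = labf k x y p) \<and> labf k x y a = labf k x y b}"
    using E by blast
  then show ?thesis
    unfolding hom_tensor_def using lx ly card_restrict[of ?V "labf k x y" "\<lambda>_. labf k x y a = labf k x y b"]
    by (simp add: tuples_def del: upt_Suc)
qed


lemma key:
  assumes qi: "level_k_qi_map k adjG adjH \<Phi>" and F: "F \<in> QP k"
    and xy: "x \<in> tuples k" "y \<in> tuples k"
    and ne: "hom_tensor k F adjG x y \<noteq> hom_tensor k F adjH a b"
  shows "\<Phi> (unitm x y) a b = 0"
proof -
  let ?c = "hom_tensor k F adjG x y"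
  have um: "unitm x y \<in> mats k" using xy by (auto simp: mats_def unitm_def)
  have lin: "linear_kmap k \<Phi>" using qi by (simp add: level_k_qi_map_def)
  have sch: "\<Phi> (schur (hom_tensor k F adjG) (unitm x y)) = schur (hom_tensor k F adjH) (\<Phi> (unitm x y))"
    using qi F um by (simp add: level_k_qi_map_def)
  have "schur (hom_tensor k F adjG) (unitm x y) = (\<lambda>p q. ?c * unitm x y p q)"
    by (auto simp: schur_def unitm_def fun_eq_iff)
  then have "\<Phi> (schur (hom_tensor k F adjG) (unitm x y)) = (\<lambda>p q. ?c * \<Phi> (unitm x y) p q)"
    using lin um by (simp add: linear_kmap_def)
  then have "?c * \<Phi> (unitm x y) a b = hom_tensor k F adjH a b * \<Phi> (unitm x y) a b"
    using sch by (metis schur_def)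
  then show ?thesis using ne by simp
qed

lemma w0_nth:
  assumes ls: "length s = k" and lt: "length t = k" and j: "j < 2*k"
  shows "(rev s @ t) ! j = labf k s t (if j < k then k - j else j + 1)"
proof (cases "j < k")
  case True
  then show ?thesis using ls by (simp add: nth_append rev_nth labf_def)
next
  case False
  then show ?thesis using ls by (simp add: nth_append labf_def)
qed

lemma cons_edge:
  assumes ls: "length s = k" and lt: "length t = k"
    and i: "Suc i < length (rotate m (rev s @ t))"
  shows "\<exists>pa pb. {pa, pb} \<in> ECk k \<and> pa \<noteq> pb \<and> pa \<in> {1..2*k} \<and> pb \<in> {1..2*k} \<and>
     rotate m (rev s @ t) ! i = labf k s t pa \<and> rotate m (rev s @ t) ! Suc i = labf k s t pb"
proof -
  let ?w0 = "rev s @ t"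
  let ?n = "2*k"
  have len: "length ?w0 = ?n" using ls lt by simp
  have i2: "Suc i < ?n" using i len by simp
  define j where "j = (m + i) mod ?n"
  have jn: "j < ?n" using i2 unfolding j_def by simp
  have wi: "rotate m ?w0 ! i = ?w0 ! j" using i2 len unfolding j_def by (simp add: nth_rotate)
  have "rotate m ?w0 ! Suc i = ?w0 ! ((m + Suc i) mod ?n)" using i2 len by (simp add: nth_rotate)
  moreover have "(m + Suc i) mod ?n = (j + 1) mod ?n" unfolding j_def by (simp add: mod_Suc_eq)
  ultimately have wsi: "rotate m ?w0 ! Suc i = ?w0 ! ((j+1) mod ?n)" by simp
  let ?\<pi> = "\<lambda>j. if j < k then k - j else j + 1"
  have A: "?w0 ! j = labf k s t (?\<pi> j)" by (rule w0_nth[OF ls lt jn])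
  have B: "?w0 ! ((j+1) mod ?n) = labf k s t (?\<pi> ((j+1) mod ?n))"
    by (rule w0_nth[OF ls lt]) (use i2 in simp)
  have E: "{?\<pi> j, ?\<pi> ((j+1) mod ?n)} \<in> ECk k \<and> ?\<pi> j \<noteq> ?\<pi> ((j+1) mod ?n) \<and>
      ?\<pi> j \<in> {1..2*k} \<and> ?\<pi> ((j+1) mod ?n) \<in> {1..2*k}"
  proof -
    consider (a) "j + 1 < k" | (b) "j + 1 = k" | (c) "k \<le> j" "j + 1 < ?n" | (d) "j + 1 = ?n"
      using jn by linarith
    then show ?thesis
    proof cases
      case a
      then have "(j+1) mod ?n = j + 1" by simp
      moreover have "{k - (j+1), k - (j+1) + 1} \<in> ECk k" unfolding ECk_def using a
        by (intro UnI1 CollectI exI[of _ "k - (j+1)"]) auto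
      moreover have "k - (j+1) + 1 = k - j" using a by simp
      ultimately show ?thesis using a by (auto simp: insert_commute)
    next
      case b
      then have "(j+1) mod ?n = k" using jn by simp
      moreover have "{1, k+1} \<in> ECk k" unfolding ECk_def by simp
      ultimately show ?thesis using b by auto
    next
      case c
      then have "(j+1) mod ?n = j + 1" by simp
      moreover have "{j+1, j+1+1} \<in> ECk k" unfolding ECk_def using c
        by (intro UnI1 CollectI exI[of _ "j+1"]) auto
      ultimately show ?thesis using c by auto
    next
      case d
      then have "(j+1) mod ?n = 0" by simp
      moreover have "{k, 2*k} \<in> ECk k" unfolding ECk_def by simp
      ultimately show ?thesis using d by (auto simp: insert_commute)
    qed
  qed
  show ?thesis
    apply (rule exI[of _ "?\<pi> j"], rule exI[of _ "?\<pi> ((j+1) mod ?n)"])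
    using E A B wi wsi by presburger
qed


lemma labf_map:
  assumes "length s = k" "length t = k" "p \<in> {1..2*k}"
  shows "f (labf k s t p) = labf k (map f s) (map f t) p"
  using assms by (auto simp: labf_def)

theorem lemma3p4:
  fixes adjG :: "'a::finite \<Rightarrow> 'a \<Rightarrow> bool" and adjH :: "'b::finite \<Rightarrow> 'b \<Rightarrow> bool"
    and k :: nat and \<Phi> :: "'a kmat \<Rightarrow> 'b kmat"
    and s t :: "('a \<times> 'b) list"
  assumes "simple_graph adjG" and "simple_graph adjH"
    and "level_k_qi_map k adjG adjH \<Phi>"
    and "length s = k" and "length t = k"
    and "\<exists>m i. let w = rotate m (rev s @ t) in
           Suc i < length w \<and>
           rel adjG (fst (w ! i)) (fst (w ! Suc i)) \<noteq> rel adjH (snd (w ! i)) (snd (w ! Suc i))"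
  shows "choi k \<Phi> s t = 0"
proof -
  note qi = assms(3) and ls = assms(4) and lt = assms(5)
  have symG: "\<forall>x y. adjG x y \<longrightarrow> adjG y x" using assms(1) by (simp add: simple_graph_def)
  have symH: "\<forall>x y. adjH x y \<longrightarrow> adjH y x" using assms(2) by (simp add: simple_graph_def)
  obtain m i where mi: "Suc i < length (rotate m (rev s @ t))"
    "rel adjG (fst (rotate m (rev s @ t) ! i)) (fst (rotate m (rev s @ t) ! Suc i)) \<noteq>
     rel adjH (snd (rotate m (rev s @ t) ! i)) (snd (rotate m (rev s @ t) ! Suc i))"
    using assms(6) by (auto simp: Let_def)
  obtain pa pb where pp: "{pa, pb} \<in> ECk k" "pa \<noteq> pb" "pa \<in> {1..2*k}" "pb \<in> {1..2*k}"
     "rotate m (rev s @ t) ! i = labf k s t pa" "rotate m (rev s @ t) ! Suc i = labf k s t pb"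
    using cons_edge[OF ls lt mi(1)] by blast
  define X where "X = map fst s"
  define Y where "Y = map fst t"
  define A where "A = map snd s"
  define B where "B = map snd t"
  have lens: "length X = k" "length Y = k" "length A = k" "length B = k"
    using ls lt by (auto simp: X_def Y_def A_def B_def)
  have tup: "X \<in> tuples k" "Y \<in> tuples k" using lens by (auto simp: tuples_def)
  define g where "g = labf k X Y pa"
  define g' where "g' = labf k X Y pb"
  define h where "h = labf k A B pa"
  define h' where "h' = labf k A B pb"
  have R: "rel adjG g g' \<noteq> rel adjH h h'"
    using mi(2) pp(3-6) labf_map[OF ls lt, of pa fst] labf_map[OF ls lt, of pb fst]
      labf_map[OF ls lt, of pa snd] labf_map[OF ls lt, of pb snd]
    by (simp add: g_def g'_def h_def h'_def X_def Y_def A_def B_def)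
  have choi_eq: "choi k \<Phi> s t = \<Phi> (unitm X Y) A B"
    by (simp add: choi_def X_def Y_def A_def B_def)
  show ?thesis
  proof (cases "(g = g') = (h = h')")
    case False
    let ?F = "({1..2*k} - {pb}, {}, map (\<lambda>w. if w = pb then pa else w) [1..<k+1],
          map (\<lambda>w. if w = pb then pa else w) [k+1..<2*k+1])"
    have F: "?F \<in> QP k" by (rule contr_edge[OF pp(1,2)])
    have "hom_tensor k ?F adjG X Y \<noteq> hom_tensor k ?F adjH A B"
      using False ht_contr[OF lens(1,2) pp(3,4,2), where adj=adjG]
        ht_contr[OF lens(3,4) pp(3,4,2), where adj=adjH]
      by (simp add: g_def g'_def h_def h'_def)
    then show ?thesis using key[OF qi F tup] choi_eq by simp
  next
    case True
    then have ne: "g \<noteq> g'" "h \<noteq> h'" using R by (auto simp: rel_def)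
    then have adjne: "adjG g g' \<noteq> adjH h h'" using R by (auto simp: rel_def split: if_splits)
    let ?F = "({1..2*k}, {{pa,pb}}, [1..<k+1], [k+1..<2*k+1])"
    have F: "?F \<in> QP k" by (rule single_edge[OF pp(1)])
    have "hom_tensor k ?F adjG X Y \<noteq> hom_tensor k ?F adjH A B"
      using adjne ht_del[OF symG lens(1,2) pp(3,4)] ht_del[OF symH lens(3,4) pp(3,4)]
      by (simp add: g_def g'_def h_def h'_def)
    then show ?thesis using key[OF qi F tup] choi_eq by simp
  qed
qed

end
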